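(* The $SEP$ composition $\mathbb{C}^2\otimes_{\min}\mathbb{C}^2$ exhibits dimension mismatch: its information dimension is strictly greater than $4$, whereas its operational (measurement) dimension equals $4$.
   Context: In $\mathbb{C}^2\otimes_{\min}\mathbb{C}^2$ (the $SEP$ composition of two qubits), states are the separable density operators on $\mathbb{C}^2\otimes\mathbb{C}^2$ and a measurement is a finite family of Hermitian operators $\{E_i\}$, each with $\operatorname{Tr}(E_iX)\ge0$ for every separable positive operator $X$, summing to the identity. The operational (measurement) dimension of a system is the maximal cardinality of a set of states perfectly distinguishable by a single measurement (i.e. a measurement $\{E_i\}$ with $\operatorname{Tr}(E_i\omega_j)=\delta_{ij}$). The information dimension is the maximal cardinality of a set of states that is pairwise distinguishable, i.e. for each pair $i\neq j$ there is some two-outcome measurement $\{E,\mathbf1-E\}$ with $\operatorname{Tr}(E\omega_i)=1$, $\operatorname{Tr}(E\omega_j)=0$. Dimension mismatch means the information dimension differs from the operational dimension. *)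

theory Defs
  imports "HOL-Analysis.Analysis" "HOL-Library.Extended_Nat"
begin

text \<open>Operators on one qubit: 2x2 complex matrices; operators on
  C^2 (x) C^2: matrices indexed by the product type 2 x 2 (a 4-dim space).\<close>

type_synonym qop = "complex ^ 2 ^ 2"
type_synonym op2 = "complex ^ (2 \<times> 2) ^ (2 \<times> 2)"

definition mtrace :: "complex ^ 'n ^ 'n \<Rightarrow> complex" where
  "mtrace A = (\<Sum>i\<in>UNIV. A $ i $ i)"

definition adjoint_m :: "complex ^ 'n ^ 'n \<Rightarrow> complex ^ 'n ^ 'n" where
  "adjoint_m A = (\<chi> i j. cnj (A $ j $ i))"

definition hermitian :: "complex ^ 'n ^ 'n \<Rightarrow> bool" where
  "hermitian A \<longleftrightarrow> adjoint_m A = A"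

definition nonneg_c :: "complex \<Rightarrow> bool" where
  "nonneg_c z \<longleftrightarrow> Im z = 0 \<and> 0 \<le> Re z"

definition psd :: "complex ^ 'n ^ 'n \<Rightarrow> bool" where
  "psd A \<longleftrightarrow> hermitian A \<and>
     (\<forall>v :: complex ^ 'n. nonneg_c (\<Sum>i\<in>UNIV. \<Sum>j\<in>UNIV. cnj (v $ i) * A $ i $ j * v $ j))"

definition kron :: "qop \<Rightarrow> qop \<Rightarrow> op2" where
  "kron A B = (\<chi> p q. A $ fst p $ fst q * B $ snd p $ snd q)"

definition sep_pos :: "op2 \<Rightarrow> bool" where
  "sep_pos X \<longleftrightarrow> (\<exists>(n::nat) A B. (\<forall>i<n. psd (A i) \<and> psd (B i)) \<and>
                       X = (\<Sum>i<n. kron (A i) (B i)))"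

definition sep_state :: "op2 \<Rightarrow> bool" where
  "sep_state \<omega> \<longleftrightarrow> sep_pos \<omega> \<and> mtrace \<omega> = 1"

definition sep_effect :: "op2 \<Rightarrow> bool" where
  "sep_effect E \<longleftrightarrow> hermitian E \<and> (\<forall>X. sep_pos X \<longrightarrow> nonneg_c (mtrace (E ** X)))"

definition sep_measurement :: "nat \<Rightarrow> (nat \<Rightarrow> op2) \<Rightarrow> bool" where
  "sep_measurement n E \<longleftrightarrow> (\<forall>i<n. sep_effect (E i)) \<and> (\<Sum>i<n. E i) = mat 1"

definition perfectly_distinguishable :: "nat \<Rightarrow> (nat \<Rightarrow> op2) \<Rightarrow> bool" where
  "perfectly_distinguishable k \<omega> \<longleftrightarrow> (\<forall>i<k. sep_state (\<omega> i)) \<and>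
     (\<exists>E. sep_measurement k E \<and>
          (\<forall>i<k. \<forall>j<k. mtrace (E i ** \<omega> j) = (if i = j then 1 else 0)))"

definition pairwise_distinguishable :: "nat \<Rightarrow> (nat \<Rightarrow> op2) \<Rightarrow> bool" where
  "pairwise_distinguishable k \<omega> \<longleftrightarrow> (\<forall>i<k. sep_state (\<omega> i)) \<and>
     (\<forall>i<k. \<forall>j<k. i \<noteq> j \<longrightarrow>
        (\<exists>E. sep_measurement 2 (\<lambda>t. if t = 0 then E else mat 1 - E) \<and>
             mtrace (E ** \<omega> i) = 1 \<and> mtrace (E ** \<omega> j) = 0))"

definition operational_dim :: enat where
  "operational_dim = Sup {enat k | k. \<exists>\<omega>. perfectly_distinguishable k \<omega>}"

definition information_dim :: enat where
  "information_dim = Sup {enat k | k. \<exists>\<omega>. pairwise_distinguishable k \<omega>}"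

end

theory Submission
  imports Defs
begin

lemma sum_2': "sum f (UNIV::2 set) = f 1 + f 2" by (rule sum_2)

lemma UNIV_22: "(UNIV :: (2\<times>2) set) = {(1,1),(1,2),(2,1),(2,2)}"
  using exhaust_2 by auto

lemma sum_22: "sum f (UNIV::(2\<times>2) set) = f (1,1) + f (1,2) + f (2,1) + f (2,2)"
  unfolding UNIV_22 by (simp add: add.assoc)

definition m2 :: "complex \<Rightarrow> complex \<Rightarrow> complex \<Rightarrow> complex \<Rightarrow> qop" where
  "m2 a b c d = vector [vector [a,b], vector [c,d]]"

lemma m2_nth[simp]: "m2 a b c d $ 1 $ 1 = a" "m2 a b c d $ 1 $ 2 = b"
  "m2 a b c d $ 2 $ 1 = c" "m2 a b c d $ 2 $ 2 = d"
  by (simp_all add: m2_def vector_2)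

lemma m2_eta: "(A::qop) = m2 (A$1$1) (A$1$2) (A$2$1) (A$2$2)"
  by (simp add: vec_eq_iff forall_2)

lemma core: fixes P Q s :: real assumes "0 \<le> P" "0 \<le> Q" "s * s \<le> P*Q"
  shows "2*(abs s) \<le> P + Q"
proof -
  have "(2*(abs s))*(2*(abs s)) \<le> (P+Q)*(P+Q)"
  proof -
    have "(2*(abs s))*(2*(abs s)) = 4* (s * s)" by (simp add: algebra_simps)
    also have "\<dots> \<le> 4*(P*Q)" using assms by simp
    also have "\<dots> \<le> (P+Q)*(P+Q)" using sum_squares_ge_zero[of "P-Q" 0]
      by (simp add: power2_eq_square algebra_simps)
    finally show ?thesis .
  qed
  hence "(2*(abs s))^2 \<le> (P+Q)^2" by (simp add: power2_eq_square)
  thus ?thesis using assms(1,2) by (meson add_nonneg_nonneg power2_le_imp_le)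
qed


definition qf :: "qop \<Rightarrow> complex^2 \<Rightarrow> complex" where
  "qf A v = (\<Sum>i\<in>UNIV. \<Sum>j\<in>UNIV. cnj (v $ i) * A $ i $ j * v $ j)"

lemma psd_qf: "psd (A::qop) \<longleftrightarrow> hermitian A \<and> (\<forall>v. nonneg_c (qf A v))"
  by (simp add: psd_def qf_def)

lemma herm2: "hermitian (A::qop) \<longleftrightarrow> Im(A$1$1)=0 \<and> Im(A$2$2)=0 \<and> A$2$1 = cnj(A$1$2)"
  unfolding hermitian_def adjoint_m_def vec_eq_iff forall_2
  by (auto simp: complex_eq_iff)

lemma herm2_form: "hermitian (A::qop) \<Longrightarrow>
   A = m2 (of_real (Re(A$1$1))) (A$1$2) (cnj (A$1$2)) (of_real (Re(A$2$2)))"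
proof -
  assume H: "hermitian A"
  have e1: "A$1$1 = of_real (Re(A$1$1))" and e2: "A$2$2 = of_real (Re(A$2$2))"
    and e3: "A$2$1 = cnj (A$1$2)"
    using H unfolding herm2 by (simp_all add: complex_eq_iff)
  show ?thesis using m2_eta[of A] e1 e2 e3 by metis
qed

lemma cmod_sq: "cmod z * cmod z = Re z * Re z + Im z * Im z"
  by (metis cmod_power2 power2_eq_square)

lemma qf_m2: "qf (m2 (of_real a) c (cnj c) (of_real b)) v =
   of_real (a * (cmod (v$1))^2 + b * (cmod (v$2))^2 + 2 * Re (cnj (v$1) * c * v$2))"
  unfolding qf_def sum_2 by (simp add: complex_eq_iff cmod_power2 power2_eq_square cmod_sq algebra_simps)

lemma nonneg_of_real[simp]: "nonneg_c (of_real r) \<longleftrightarrow> 0 \<le> r"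
  by (simp add: nonneg_c_def)

lemma vec2_nth[simp]: "(vector [x,y] :: 'a::zero^2) $ 1 = x" "(vector [x,y] :: 'a::zero^2) $ 2 = y"
  by (simp_all add: vector_2)

lemma psd_m2_iff: "psd (m2 (of_real a) c (cnj c) (of_real b)) \<longleftrightarrow>
    0 \<le> a \<and> 0 \<le> b \<and> (cmod c)^2 \<le> a * b" (is "?L \<longleftrightarrow> ?R")
proof
  assume L: ?L
  have q: "0 \<le> a * (cmod (v$1))^2 + b * (cmod (v$2))^2 + 2 * Re (cnj (v$1) * c * v$2)" for v :: "complex^2"
  proof -
    have "nonneg_c (qf (m2 (of_real a) c (cnj c) (of_real b)) v)" using L psd_qf by blast
    thus ?thesis unfolding qf_m2 nonneg_of_real .
  qed
  have a: "0 \<le> a" using q[of "vector [1,0]"] by simp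
  have b: "0 \<le> b" using q[of "vector [0,1]"] by simp
  have cc: "Re (cnj c * c) = (cmod c)^2" by (simp add: power2_eq_square cmod_sq)
  have "(cmod c)^2 \<le> a * b"
  proof (cases "a > 0")
    case True
    have "0 \<le> a * (cmod c)^2 + b * a^2 + 2 * Re (cnj (-c) * c * of_real a)"
      using q[of "vector [-c, of_real a]"] by (simp add: norm_minus_cancel)
    also have "\<dots> = a * (a * b - (cmod c)^2)" by (simp add: algebra_simps power2_eq_square cmod_sq)
    finally show ?thesis using True by (simp add: zero_le_mult_iff)
  next
    case F: False
    hence a0: "a = 0" using a by simp
    show ?thesis
    proof (cases "b > 0")
      case True
      have "0 \<le> a * b^2 + b * (cmod c)^2 + 2 * Re (of_real b * c * (- cnj c))"
        using q[of "vector [of_real b, - cnj c]"] by simp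
      also have "\<dots> = b * (a * b - (cmod c)^2)" by (simp add: algebra_simps power2_eq_square cmod_sq)
      finally show ?thesis using True by (simp add: zero_le_mult_iff)
    next
      case False
      hence b0: "b = 0" using b by simp
      have "0 \<le> 2 * Re (cnj (-c) * c)"
        using q[of "vector [-c, 1]"] a0 b0 by simp
      thus ?thesis using a0 b0 by (simp add: power2_eq_square cmod_sq)
    qed
  qed
  thus ?R using a b by simp
next
  assume R: ?R
  have "nonneg_c (qf (m2 (of_real a) c (cnj c) (of_real b)) v)" for v :: "complex^2"
  proof -
    let ?P = "a * (cmod (v$1))^2" and ?Q = "b * (cmod (v$2))^2" and ?s = "Re (cnj (v$1) * c * v$2)"
    have h: "abs ?s \<le> cmod (cnj (v$1) * c * v$2)" by (rule abs_Re_le_cmod)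
    have "?s * ?s \<le> (cmod (cnj (v$1) * c * v$2))^2"
      using mult_mono[OF h h] by (simp add: power2_eq_square)
    also have "\<dots> = (cmod (v$1))^2 * (cmod c)^2 * (cmod (v$2))^2" by (simp add: norm_mult power_mult_distrib)
    also have "\<dots> \<le> (cmod (v$1))^2 * (a * b) * (cmod (v$2))^2"
      using R by (intro mult_right_mono mult_left_mono) auto
    also have "\<dots> = ?P * ?Q" by (simp add: algebra_simps)
    finally have "2 * abs ?s \<le> ?P + ?Q" using R by (intro core) auto
    hence "0 \<le> ?P + ?Q + 2 * ?s" by linarith
    thus ?thesis by (simp only: qf_m2 nonneg_of_real)
  qed
  moreover have "hermitian (m2 (of_real a) c (cnj c) (of_real b))" by (simp add: herm2)
  ultimately show ?L by (simp add: psd_qf)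
qed

lemma psd2_iff: "psd (A::qop) \<longleftrightarrow> Im(A$1$1)=0 \<and> Im(A$2$2)=0 \<and> A$2$1 = cnj(A$1$2) \<and>
   0 \<le> Re (A$1$1) \<and> 0 \<le> Re (A$2$2) \<and> (cmod (A$1$2))^2 \<le> Re (A$1$1) * Re (A$2$2)"
proof (cases "hermitian A")
  case True
  show ?thesis using True psd_m2_iff herm2_form[OF True] herm2 by metis
next
  case False
  thus ?thesis by (auto simp: psd_def herm2)
qed


lemma mtrace_mult: "mtrace (E ** X) = (\<Sum>i\<in>UNIV. \<Sum>k\<in>UNIV. E$i$k * X$k$i)"
  by (simp add: mtrace_def matrix_matrix_mult_def)

lemma tr_add: "mtrace (E ** (X + Y)) = mtrace (E ** X) + mtrace (E ** Y)"
  by (simp add: mtrace_mult sum.distrib distrib_left)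

lemma tr_diff: "mtrace (E ** (X - Y)) = mtrace (E ** X) - mtrace (E ** Y)"
  by (simp add: mtrace_mult sum_subtractf right_diff_distrib)

lemma tr_sum: "mtrace (E ** sum f S) = (\<Sum>s\<in>S. mtrace (E ** f s))"
proof -
  have "mtrace (E ** sum f S) = (\<Sum>i\<in>UNIV. \<Sum>k\<in>UNIV. \<Sum>s\<in>S. E$i$k * f s$k$i)"
    by (simp add: mtrace_mult sum_distrib_left)
  also have "\<dots> = (\<Sum>i\<in>UNIV. \<Sum>s\<in>S. \<Sum>k\<in>UNIV. E$i$k * f s$k$i)"
    by (rule sum.cong[OF refl], rule sum.swap)
  also have "\<dots> = (\<Sum>s\<in>S. \<Sum>i\<in>UNIV. \<Sum>k\<in>UNIV. E$i$k * f s$k$i)"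
    by (rule sum.swap)
  finally show ?thesis by (simp add: mtrace_mult)
qed

lemma tr_ldiff: "mtrace ((A - B) ** X) = mtrace (A ** X) - mtrace (B ** X)"
  by (simp add: mtrace_mult sum_subtractf left_diff_distrib)

lemma tr_lsum: "mtrace (sum f S ** X) = (\<Sum>s\<in>S. mtrace (f s ** X))"
proof -
  have "mtrace (sum f S ** X) = (\<Sum>i\<in>UNIV. \<Sum>k\<in>UNIV. \<Sum>s\<in>S. f s$i$k * X$k$i)"
    by (simp add: mtrace_mult sum_distrib_right)
  also have "\<dots> = (\<Sum>i\<in>UNIV. \<Sum>s\<in>S. \<Sum>k\<in>UNIV. f s$i$k * X$k$i)"
    by (rule sum.cong[OF refl], rule sum.swap)
  also have "\<dots> = (\<Sum>s\<in>S. \<Sum>i\<in>UNIV. \<Sum>k\<in>UNIV. f s$i$k * X$k$i)"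
    by (rule sum.swap)
  finally show ?thesis by (simp add: mtrace_mult)
qed

lemma tr_mat1: "mtrace (mat 1 ** X) = mtrace X"
  by simp

lemma mtrace_sum: "mtrace (sum f S) = (\<Sum>s\<in>S. mtrace (f s))"
  using tr_lsum[of f S "mat 1"] by simp

lemma mtrace_mat1: "mtrace (mat 1 :: op2) = 4"
  by (simp add: mtrace_def mat_def sum_22)

lemma forall_22: "(\<forall>p::2\<times>2. P p) \<longleftrightarrow> P (1,1) \<and> P (1,2) \<and> P (2,1) \<and> P (2,2)"
  using UNIV_22 by (metis UNIV_I insertCI insertE empty_iff)

lemma mtrace2: "mtrace (A::qop) = A$1$1 + A$2$2"
  by (simp add: mtrace_def sum_2)

lemma mtrace_kron: "mtrace (kron A B) = mtrace A * mtrace B"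
  by (simp add: mtrace_def sum_22 sum_2 kron_def algebra_simps)

lemma sep_pos_0: "sep_pos 0"
  unfolding sep_pos_def by (rule exI[of _ 0]) simp

lemma sep_pos_kron: "psd A \<Longrightarrow> psd B \<Longrightarrow> sep_pos (kron A B)"
  unfolding sep_pos_def by (rule exI[of _ 1], rule exI[of _ "\<lambda>_. A"], rule exI[of _ "\<lambda>_. B"]) simp

lemma sep_pos_add: assumes "sep_pos X" "sep_pos Y" shows "sep_pos (X + Y)"
proof -
  obtain n :: nat and A B where 1: "\<forall>i<n. psd (A i) \<and> psd (B i)" "X = (\<Sum>i<n. kron (A i) (B i))"
    using assms(1) unfolding sep_pos_def by blast
  obtain m :: nat and C D where 2: "\<forall>i<m. psd (C i) \<and> psd (D i)" "Y = (\<Sum>i<m. kron (C i) (D i))"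
    using assms(2) unfolding sep_pos_def by blast
  define A' where "A' i = (if i < n then A i else C (i - n))" for i
  define B' where "B' i = (if i < n then B i else D (i - n))" for i
  have "(\<Sum>i<n+m. kron (A' i) (B' i)) = (\<Sum>i<n. kron (A' i) (B' i)) + (\<Sum>i<m. kron (A' (n+i)) (B' (n+i)))"
  proof -
    have "(\<Sum>i<n+m. kron (A' i) (B' i)) = (\<Sum>i\<in>{0..<n}. kron (A' i) (B' i)) + (\<Sum>i\<in>{n..<n+m}. kron (A' i) (B' i))"
      by (simp add: lessThan_atLeast0 sum.atLeastLessThan_concat)
    also have "(\<Sum>i\<in>{n..<n+m}. kron (A' i) (B' i)) = (\<Sum>i\<in>{0..<m}. kron (A' (i+n)) (B' (i+n)))"
      using sum.shift_bounds_nat_ivl[of "\<lambda>i. kron (A' i) (B' i)" 0 n m] by (simp add: add.commute)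
    finally show ?thesis by (simp add: lessThan_atLeast0 add.commute)
  qed
  also have "\<dots> = X + Y" using 1 2 by (simp add: A'_def B'_def)
  finally have "X + Y = (\<Sum>i<n+m. kron (A' i) (B' i))" by simp
  moreover have "\<forall>i<n+m. psd (A' i) \<and> psd (B' i)" using 1 2 by (auto simp: A'_def B'_def)
  ultimately show ?thesis unfolding sep_pos_def by blast
qed

lemma sep_pos_sum: assumes "finite S" "\<forall>i\<in>S. sep_pos (f i)" shows "sep_pos (sum f S)"
  using assms by (induction S rule: finite_induct) (auto intro: sep_pos_add sep_pos_0)

lemma nonneg_add: "nonneg_c a \<Longrightarrow> nonneg_c b \<Longrightarrow> nonneg_c (a + b)"
  by (simp add: nonneg_c_def)

lemma nonneg_sum: "(\<And>i. i \<in> S \<Longrightarrow> nonneg_c (f i)) \<Longrightarrow> nonneg_c (sum f S)"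
  by (induction S rule: infinite_finite_induct) (auto intro: nonneg_add simp: nonneg_c_def)

lemma nonneg_mult: "nonneg_c a \<Longrightarrow> nonneg_c b \<Longrightarrow> nonneg_c (a * b)"
  by (simp add: nonneg_c_def)

lemma sep_effect_intro:
  assumes "hermitian E" "\<And>A B. psd A \<Longrightarrow> psd B \<Longrightarrow> nonneg_c (mtrace (E ** kron A B))"
  shows "sep_effect E"
  unfolding sep_effect_def
proof (intro conjI allI impI assms(1))
  fix X assume "sep_pos X"
  then obtain n :: nat and A B where 1: "\<forall>i<n. psd (A i) \<and> psd (B i)" "X = (\<Sum>i<n. kron (A i) (B i))"
    unfolding sep_pos_def by blast
  show "nonneg_c (mtrace (E ** X))" unfolding 1(2) tr_sum
    using 1(1) assms(2) by (intro nonneg_sum) auto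
qed


section \<open>Upper bound on the operational dimension\<close>

definition adj2 :: "qop \<Rightarrow> qop" where
  "adj2 A = m2 (A$2$2) (- A$1$2) (- A$2$1) (A$1$1)"

lemma psd_adj2: "psd A \<Longrightarrow> psd (adj2 A)"
  unfolding psd2_iff adj2_def by (simp add: mult.commute)

lemma psd_scal: "psd (A::qop) \<Longrightarrow> psd (m2 (mtrace A) 0 0 (mtrace A))"
  by (simp add: psd2_iff mtrace2)

lemma kron_identity:
  "kron (adj2 A) (m2 (mtrace B) 0 0 (mtrace B)) + kron A (adj2 B) = mat (mtrace A * mtrace B) - kron A B"
  unfolding vec_eq_iff forall_22 by (simp add: kron_def adj2_def mat_def mtrace2 algebra_simps)

lemma sep_pos_compl: assumes "sep_state \<omega>" shows "sep_pos (mat 1 - \<omega>)"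
proof -
  obtain n :: nat and A B where 1: "\<forall>i<n. psd (A i) \<and> psd (B i)" "\<omega> = (\<Sum>i<n. kron (A i) (B i))"
    using assms unfolding sep_state_def sep_pos_def by blast
  have t: "(\<Sum>i<n. mtrace (A i) * mtrace (B i)) = 1"
    using assms 1(2) unfolding sep_state_def by (simp add: mtrace_sum mtrace_kron)
  have m: "mat (\<Sum>i<n. c i) = (\<Sum>i<n. mat (c i) :: op2)" for c :: "nat \<Rightarrow> complex"
    by (simp add: vec_eq_iff mat_def sum.If_cases)
  have "mat 1 - \<omega> = (\<Sum>i<n. mat (mtrace (A i) * mtrace (B i)) - kron (A i) (B i))"
    unfolding 1(2) t[symmetric] m by (simp add: sum_subtractf)
  also have "\<dots> = (\<Sum>i<n. kron (adj2 (A i)) (m2 (mtrace (B i)) 0 0 (mtrace (B i))) + kron (A i) (adj2 (B i)))"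
    by (simp add: kron_identity)
  finally show ?thesis using 1(1)
    by (auto intro!: sep_pos_sum sep_pos_add sep_pos_kron psd_adj2 psd_scal)
qed

lemma effect_trace_ge: assumes "sep_effect E" "sep_state \<omega>" "mtrace (E ** \<omega>) = 1"
  shows "1 \<le> Re (mtrace E)"
proof -
  have "nonneg_c (mtrace (E ** (mat 1 - \<omega>)))"
    using assms(1) sep_pos_compl[OF assms(2)] unfolding sep_effect_def by blast
  thus ?thesis unfolding tr_diff assms(3) by (simp add: nonneg_c_def)
qed

lemma perf_le4: assumes "perfectly_distinguishable k \<omega>" shows "k \<le> 4"
proof -
  obtain E where E: "sep_measurement k E" "\<forall>i<k. \<forall>j<k. mtrace (E i ** \<omega> j) = (if i = j then 1 else 0)"
    using assms unfolding perfectly_distinguishable_def by blast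
  have ge: "1 \<le> Re (mtrace (E i))" if "i < k" for i
    using effect_trace_ge[of "E i" "\<omega> i"] E that assms
    unfolding sep_measurement_def perfectly_distinguishable_def by auto
  have "real k = (\<Sum>i<k. 1)" by simp
  also have "\<dots> \<le> (\<Sum>i<k. Re (mtrace (E i)))" by (rule sum_mono) (use ge in auto)
  also have "\<dots> = Re (mtrace (\<Sum>i<k. E i))" by (simp add: mtrace_sum)
  also have "\<dots> = 4" using E(1) unfolding sep_measurement_def by (simp add: mtrace_mat1)
  finally show ?thesis by simp
qed


section \<open>Four perfectly distinguishable states\<close>

lemma tr_kron_kron: "mtrace (kron P Q ** kron A B) = mtrace (P ** A) * mtrace (Q ** B)"
  by (simp add: mtrace_mult sum_22 sum_2 kron_def algebra_simps)

definition ee :: "2 \<Rightarrow> qop" where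
  "ee a = m2 (if a = 1 then 1 else 0) 0 0 (if a = 2 then 1 else 0)"

lemma ee_cases: "ee 1 = m2 1 0 0 0" "ee 2 = m2 0 0 0 1"
  by (simp_all add: ee_def)

lemma psd_ee: "psd (ee a)"
  using exhaust_2[of a] by (auto simp: ee_cases psd2_iff)

lemma tr_ee: "mtrace (ee a ** A) = A $ a $ a"
  using exhaust_2[of a] by (auto simp: ee_cases mtrace_mult sum_2)

lemma ee_nth: "ee b $ a $ a = (if a = b then 1 else 0)"
  using exhaust_2[of a] exhaust_2[of b] by (auto simp: ee_cases)

lemma tr_ee1: "mtrace (ee a) = 1"
  using exhaust_2[of a] by (auto simp: ee_cases mtrace2)

lemma herm_ee: "hermitian (ee a)"
  using psd_ee psd_def by blast

lemma herm_kron: "hermitian A \<Longrightarrow> hermitian B \<Longrightarrow> hermitian (kron A B)"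
  unfolding hermitian_def adjoint_m_def kron_def vec_eq_iff
  by (simp add: vec_eq_iff)

definition D :: "2\<times>2 \<Rightarrow> op2" where "D p = kron (ee (fst p)) (ee (snd p))"

lemma psd_diag_nonneg: "psd (A::qop) \<Longrightarrow> nonneg_c (A $ a $ a)"
  using exhaust_2[of a] by (auto simp: psd2_iff nonneg_c_def)

lemma sep_effect_D: "sep_effect (D p)"
  unfolding D_def
proof (rule sep_effect_intro)
  show "hermitian (kron (ee (fst p)) (ee (snd p)))" by (intro herm_kron herm_ee)
  fix A B :: qop assume "psd A" "psd B"
  thus "nonneg_c (mtrace (kron (ee (fst p)) (ee (snd p)) ** kron A B))"
    unfolding tr_kron_kron tr_ee by (intro nonneg_mult psd_diag_nonneg)
qed

lemma sep_state_D: "sep_state (D p)"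
  unfolding sep_state_def D_def
  by (simp add: sep_pos_kron psd_ee mtrace_kron tr_ee1)

lemma tr_D: "mtrace (D p ** D q) = (if p = q then 1 else 0)"
  unfolding D_def tr_kron_kron tr_ee
  by (auto simp: ee_nth prod_eq_iff)

definition idx :: "nat \<Rightarrow> 2\<times>2" where
  "idx k = (if k < 2 then 1 else 2, if k mod 2 = 0 then 1 else 2)"

lemma all4: "(\<forall>i<(4::nat). P i) \<longleftrightarrow> P 0 \<and> P 1 \<and> P 2 \<and> P 3"
  by (auto simp: numeral_eq_Suc less_Suc_eq)

lemma sum4: "(\<Sum>i<(4::nat). f i) = f 0 + f 1 + f 2 + f 3"
  by (simp add: numeral_eq_Suc add.commute add.left_commute)

lemma D_sum: "(\<Sum>k<4. D (idx k)) = mat 1"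
  unfolding sum4 vec_eq_iff forall_22
  by (simp add: D_def idx_def kron_def ee_def mat_def)

lemma perf4: "perfectly_distinguishable 4 (\<lambda>k. D (idx k))"
proof -
  have "\<forall>i<4. \<forall>j<4. mtrace (D (idx i) ** D (idx j)) = (if i = j then 1 else 0)"
    unfolding tr_D all4 by (simp add: idx_def prod_eq_iff)
  moreover have "sep_measurement 4 (\<lambda>k. D (idx k))"
    unfolding sep_measurement_def by (simp add: sep_effect_D D_sum)
  ultimately show ?thesis unfolding perfectly_distinguishable_def
    by (auto simp: sep_state_D)
qed

lemma operational_dim_4: "operational_dim = 4"
  unfolding operational_dim_def
proof (rule Sup_eqI)
  show "y \<le> 4" if "y \<in> {enat k |k. \<exists>\<omega>. perfectly_distinguishable k \<omega>}" for y
    using that perf_le4 by (auto simp: numeral_eq_enat)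
  show "4 \<le> y" if "\<And>z. z \<in> {enat k |k. \<exists>\<omega>. perfectly_distinguishable k \<omega>} \<Longrightarrow> z \<le> y" for y
    using that[of 4] perf4 by (auto simp: numeral_eq_enat)
qed


section \<open>Five pairwise distinguishable states\<close>

definition hm :: "real \<Rightarrow> complex \<Rightarrow> real \<Rightarrow> qop" where
  "hm a c b = m2 (of_real a) c (cnj c) (of_real b)"

definition W :: "qop \<Rightarrow> op2" where
  "W U = (\<chi> p q. U $ fst p $ snd q * cnj (U $ fst q $ snd p))"

definition "UI = m2 1 0 0 1"
definition "UX = m2 0 1 1 0"
definition "UZ = m2 1 0 0 (-1)"
definition "UY = m2 0 1 (-1) 0"

lemma trW_I: "mtrace (W UI ** kron (hm a1 c a2) (hm b1 e b2)) = of_real (a1*b1 + a2*b2 + 2 * Re (c * cnj e))"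
  by (simp add: mtrace_mult sum_22 sum_2 W_def UI_def hm_def kron_def complex_eq_iff algebra_simps)

lemma trW_Z: "mtrace (W UZ ** kron (hm a1 c a2) (hm b1 e b2)) = of_real (a1*b1 + a2*b2 - 2 * Re (c * cnj e))"
  by (simp add: mtrace_mult sum_22 sum_2 W_def UZ_def hm_def kron_def complex_eq_iff algebra_simps)

lemma trW_X: "mtrace (W UX ** kron (hm a1 c a2) (hm b1 e b2)) = of_real (a1*b2 + a2*b1 + 2 * Re (c * e))"
  by (simp add: mtrace_mult sum_22 sum_2 W_def UX_def hm_def kron_def complex_eq_iff algebra_simps)

lemma trW_Y: "mtrace (W UY ** kron (hm a1 c a2) (hm b1 e b2)) = of_real (a1*b2 + a2*b1 - 2 * Re (c * e))"
  by (simp add: mtrace_mult sum_22 sum_2 W_def UY_def hm_def kron_def complex_eq_iff algebra_simps)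

lemma tr_kron_hm: "mtrace (kron (hm a1 c a2) (hm b1 e b2)) = of_real ((a1+a2)*(b1+b2))"
  by (simp add: mtrace_kron mtrace2 hm_def)


lemma nn: fixes a1 a2 b1 b2 P Q :: real
  assumes "0 \<le> P" "0 \<le> Q" "P * Q = (a1*a2)*(b1*b2)" "0 \<le> a1" "0 \<le> a2" "0 \<le> b1" "0 \<le> b2"
    "(cmod c)^2 \<le> a1*a2" "(cmod e)^2 \<le> b1*b2" "cmod z = cmod c * cmod e"
  shows "0 \<le> P + Q + 2 * Re z" "0 \<le> P + Q - 2 * Re z"
proof -
  have h: "abs (Re z) \<le> cmod z" by (rule abs_Re_le_cmod)
  have "Re z * Re z \<le> (cmod z)^2" using mult_mono[OF h h] by (simp add: power2_eq_square)
  also have "\<dots> = (cmod c)^2 * (cmod e)^2" using assms(10) by (simp add: power_mult_distrib)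
  also have "\<dots> \<le> (a1*a2)*(b1*b2)" using assms by (intro mult_mono) auto
  finally have "2 * abs (Re z) \<le> P + Q" using assms(1,2,3) by (intro core) auto
  thus "0 \<le> P + Q + 2 * Re z" "0 \<le> P + Q - 2 * Re z" by linarith+
qed

lemma psd_hm: assumes "psd (A::qop)"
  obtains a1 c a2 where "A = hm a1 c a2" "0 \<le> a1" "0 \<le> a2" "(cmod c)^2 \<le> a1*a2"
proof -
  have H: "hermitian A" using assms psd_def by blast
  show ?thesis using that[OF herm2_form[OF H, folded hm_def]] assms unfolding psd2_iff by blast
qed

lemma nn_help: assumes "psd A" "psd B"
  "\<And>a1 c a2 b1 e b2. 0\<le>a1 \<Longrightarrow> 0\<le>a2 \<Longrightarrow> 0\<le>b1 \<Longrightarrow> 0\<le>b2 \<Longrightarrow> (cmod c)^2 \<le> a1*a2 \<Longrightarrow>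
      (cmod e)^2 \<le> b1*b2 \<Longrightarrow> nonneg_c (g (kron (hm a1 c a2) (hm b1 e b2)))"
  shows "nonneg_c (g (kron A B))"
proof -
  obtain a1 c a2 where A: "A = hm a1 c a2" "0 \<le> a1" "0 \<le> a2" "(cmod c)^2 \<le> a1*a2"
    using psd_hm[OF assms(1)] by blast
  obtain b1 e b2 where B: "B = hm b1 e b2" "0 \<le> b1" "0 \<le> b2" "(cmod e)^2 \<le> b1*b2"
    using psd_hm[OF assms(2)] by blast
  show ?thesis unfolding A(1) B(1) using A B assms(3) by blast
qed

lemma herm_W: "hermitian (W U)"
  unfolding hermitian_def adjoint_m_def W_def vec_eq_iff by (simp add: mult.commute)

lemma herm_cW: "hermitian (mat 1 - W U)"
  unfolding hermitian_def adjoint_m_def W_def vec_eq_iff by (simp add: mult.commute mat_def)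

lemma tr_compl: "mtrace ((mat 1 - E) ** X) = mtrace X - mtrace (E ** X)"
  by (simp add: tr_ldiff)

lemma cmod_cnj_mult: "cmod (c * cnj e) = cmod c * cmod e"
  by (simp add: norm_mult)

lemma eff_I: "sep_effect (W UI)" "sep_effect (mat 1 - W UI)"
proof -
  show "sep_effect (W UI)"
    by (rule sep_effect_intro[OF herm_W], rule nn_help[where g = "\<lambda>K. mtrace (W UI ** K)"],
        assumption, assumption, simp only: trW_I nonneg_of_real, rule nn(1))
       (auto simp: norm_mult algebra_simps)
  show "sep_effect (mat 1 - W UI)"
    by (rule sep_effect_intro[OF herm_cW], rule nn_help[where g = "\<lambda>K. mtrace ((mat 1 - W UI) ** K)"],
        assumption, assumption, simp only: tr_compl trW_I tr_kron_hm of_real_diff[symmetric] nonneg_of_real)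
       (use nn(2)[of "a1*b2" "a2*b1" a1 a2 b1 b2 c e "c * cnj e" for a1 a2 b1 b2 c e] in \<open>auto simp: norm_mult algebra_simps\<close>)
qed


lemma eff_Z: "sep_effect (W UZ)" "sep_effect (mat 1 - W UZ)"
proof -
  show "sep_effect (W UZ)"
    by (rule sep_effect_intro[OF herm_W], rule nn_help[where g = "\<lambda>K. mtrace (W UZ ** K)"],
        assumption, assumption, simp only: trW_Z nonneg_of_real)
       (use nn(2)[of "a1*b1" "a2*b2" a1 a2 b1 b2 c e "c * cnj e" for a1 a2 b1 b2 c e] in \<open>auto simp: norm_mult algebra_simps\<close>)
  show "sep_effect (mat 1 - W UZ)"
    by (rule sep_effect_intro[OF herm_cW], rule nn_help[where g = "\<lambda>K. mtrace ((mat 1 - W UZ) ** K)"],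
        assumption, assumption, simp only: tr_compl trW_Z tr_kron_hm of_real_diff[symmetric] nonneg_of_real)
       (use nn(1)[of "a1*b2" "a2*b1" a1 a2 b1 b2 c e "c * cnj e" for a1 a2 b1 b2 c e] in \<open>auto simp: norm_mult algebra_simps\<close>)
qed

lemma eff_X: "sep_effect (W UX)" "sep_effect (mat 1 - W UX)"
proof -
  show "sep_effect (W UX)"
    by (rule sep_effect_intro[OF herm_W], rule nn_help[where g = "\<lambda>K. mtrace (W UX ** K)"],
        assumption, assumption, simp only: trW_X nonneg_of_real)
       (use nn(1)[of "a1*b2" "a2*b1" a1 a2 b1 b2 c e "c * e" for a1 a2 b1 b2 c e] in \<open>auto simp: norm_mult algebra_simps\<close>)
  show "sep_effect (mat 1 - W UX)"
    by (rule sep_effect_intro[OF herm_cW], rule nn_help[where g = "\<lambda>K. mtrace ((mat 1 - W UX) ** K)"],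
        assumption, assumption, simp only: tr_compl trW_X tr_kron_hm of_real_diff[symmetric] nonneg_of_real)
       (use nn(2)[of "a1*b1" "a2*b2" a1 a2 b1 b2 c e "c * e" for a1 a2 b1 b2 c e] in \<open>auto simp: norm_mult algebra_simps\<close>)
qed

lemma eff_Y: "sep_effect (W UY)" "sep_effect (mat 1 - W UY)"
proof -
  show "sep_effect (W UY)"
    by (rule sep_effect_intro[OF herm_W], rule nn_help[where g = "\<lambda>K. mtrace (W UY ** K)"],
        assumption, assumption, simp only: trW_Y nonneg_of_real)
       (use nn(2)[of "a1*b2" "a2*b1" a1 a2 b1 b2 c e "c * e" for a1 a2 b1 b2 c e] in \<open>auto simp: norm_mult algebra_simps\<close>)
  show "sep_effect (mat 1 - W UY)"
    by (rule sep_effect_intro[OF herm_cW], rule nn_help[where g = "\<lambda>K. mtrace ((mat 1 - W UY) ** K)"],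
        assumption, assumption, simp only: tr_compl trW_Y tr_kron_hm of_real_diff[symmetric] nonneg_of_real)
       (use nn(1)[of "a1*b1" "a2*b2" a1 a2 b1 b2 c e "c * e" for a1 a2 b1 b2 c e] in \<open>auto simp: norm_mult algebra_simps\<close>)
qed


definition st :: "nat \<Rightarrow> op2" where
  "st k = (if k = 0 then kron (hm 1 0 0) (hm 1 0 0)
    else if k = 1 then kron (hm 1 0 0) (hm 0 0 1)
    else if k = 2 then kron (hm (1/2) (1/2) (1/2)) (hm (1/2) (1/2) (1/2))
    else if k = 3 then kron (hm (1/2) (1/2) (1/2)) (hm (1/2) (-1/2) (1/2))
    else kron (hm (1/2) (-\<i>/2) (1/2)) (hm (1/2) (-\<i>/2) (1/2)))"

definition uf :: "nat \<Rightarrow> nat \<Rightarrow> qop" where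
  "uf i j = (if (i,j) = (0,2) \<or> (i,j) = (0,4) \<or> (i,j) = (3,4) then UZ
     else if (i,j) = (1,2) then UY
     else if (i,j) = (1,3) \<or> (i,j) = (1,4) \<or> (i,j) = (2,4) then UX
     else UI)"

definition wit :: "nat \<Rightarrow> nat \<Rightarrow> op2" where
  "wit i j = (if i < j then W (uf i j) else mat 1 - W (uf j i))"

lemma eff_uf: "sep_effect (W (uf i j))" "sep_effect (mat 1 - W (uf i j))"
  unfolding uf_def using eff_I eff_X eff_Y eff_Z by auto

lemma eff_wit: "sep_effect (wit i j)" "sep_effect (mat 1 - wit i j)"
  unfolding wit_def using eff_uf by auto

lemma psd_hm_iff: "psd (hm a c b) \<longleftrightarrow> 0 \<le> a \<and> 0 \<le> b \<and> (cmod c)^2 \<le> a * b"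
  unfolding hm_def by (rule psd_m2_iff)

lemma cmod_i2: "cmod (- \<i> / 2) = 1/2"
  by (simp add: norm_divide)

lemma sep_state_st: "sep_state (st k)"
  unfolding sep_state_def st_def
  by (auto intro!: sep_pos_kron simp: psd_hm_iff tr_kron_hm cmod_i2 power2_eq_square)

lemma all5: "(\<forall>i<(5::nat). P i) \<longleftrightarrow> P 0 \<and> P 1 \<and> P 2 \<and> P 3 \<and> P 4"
  by (auto simp: numeral_eq_Suc less_Suc_eq)

lemma vals: "\<forall>i<5. \<forall>j<5. i \<noteq> j \<longrightarrow> mtrace (wit i j ** st i) = 1 \<and> mtrace (wit i j ** st j) = 0"
  unfolding all5
  by (simp add: wit_def uf_def st_def trW_I trW_X trW_Y trW_Z tr_compl tr_kron_hm)


lemma pw5: "pairwise_distinguishable 5 st"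
  unfolding pairwise_distinguishable_def
proof (intro conjI allI impI)
  fix i :: nat show "sep_state (st i)" by (rule sep_state_st)
next
  fix i j :: nat assume ij: "i < 5" "j < 5" "i \<noteq> j"
  have m: "sep_measurement 2 (\<lambda>t. if t = 0 then wit i j else mat 1 - wit i j)"
    unfolding sep_measurement_def using eff_wit[of i j]
    by (auto simp: numeral_eq_Suc less_Suc_eq)
  show "\<exists>E. sep_measurement 2 (\<lambda>t. if t = 0 then E else mat 1 - E) \<and>
             mtrace (E ** st i) = 1 \<and> mtrace (E ** st j) = 0"
    using m vals ij by blast
qed

lemma information_dim_gt4: "information_dim > 4"
proof -
  have "enat 5 \<in> {enat k |k. \<exists>\<omega>. pairwise_distinguishable k \<omega>}" using pw5 by blast
  hence "enat 5 \<le> information_dim" unfolding information_dim_def by (rule Sup_upper)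
  moreover have "enat 4 < enat 5" by simp
  ultimately show ?thesis by (metis numeral_eq_enat order_less_le_trans)
qed

theorem corollary1:
  shows "information_dim > 4 \<and> operational_dim = 4"
  using information_dim_gt4 operational_dim_4 by blast

end
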